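(* Let $k\ge2$ be an integer and $\lambda$ a real number with $0<\lambda<\frac{2}{k+1}$. Then the Poisson distribution of order $k$ with parameter $\lambda$ has the unique mode $0$, i.e. $f_k(0;\lambda)>f_k(n;\lambda)$ for every integer $n\ge1$.
   Context: For an integer $k\ge1$ and a real $\lambda>0$, the Poisson distribution of order $k$ with parameter $\lambda$ is the distribution on $\{0,1,2,\dots\}$ with probability mass function $$f_k(n;\lambda)=e^{-k\lambda}\sum_{\substack{n_1,\dots,n_k\ge 0\\ n_1+2n_2+\dots+kn_k=n}}\frac{\lambda^{n_1+\dots+n_k}}{n_1!\cdots n_k!},\qquad n=0,1,2,\dots$$ A mode is any $n$ at which $f_k(n;\lambda)$ attains its global maximum over $n\ge0$. *)

theory Defs
  imports Complex_Main
begin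

text \<open>Index tuples (n_1,...,n_k) represented as functions nat => nat supported on {1..k},
  with n_1 + 2 n_2 + ... + k n_k = n.\<close>
definition poisson_k_tuples :: "nat \<Rightarrow> nat \<Rightarrow> (nat \<Rightarrow> nat) set" where
  "poisson_k_tuples k n =
     {ns. (\<forall>i. i \<notin> {1..k} \<longrightarrow> ns i = 0) \<and> (\<Sum>i\<in>{1..k}. i * ns i) = n}"

definition poisson_k_pmf :: "nat \<Rightarrow> real \<Rightarrow> nat \<Rightarrow> real" where
  "poisson_k_pmf k lam n =
     exp (- (real k * lam)) *
     (\<Sum>ns\<in>poisson_k_tuples k n.
        lam ^ (\<Sum>i\<in>{1..k}. ns i) / (\<Prod>i\<in>{1..k}. fact (ns i)))"

end

theory Submission
  imports Defs
begin

definition wt :: "nat \<Rightarrow> real \<Rightarrow> (nat \<Rightarrow> nat) \<Rightarrow> real" where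
  "wt k lam ns = lam ^ (\<Sum>i\<in>{1..k}. ns i) / (\<Prod>i\<in>{1..k}. fact (ns i))"

definition SS :: "nat \<Rightarrow> real \<Rightarrow> nat \<Rightarrow> real" where
  "SS k lam n = (\<Sum>ns\<in>poisson_k_tuples k n. wt k lam ns)"

lemma pmf_SS: "poisson_k_pmf k lam n = exp (- (real k * lam)) * SS k lam n"
  unfolding poisson_k_pmf_def SS_def wt_def by simp

lemma tuples_le:
  assumes "ns \<in> poisson_k_tuples k n" "i \<in> {1..k}"
  shows "i * ns i \<le> n"
proof -
  have "i * ns i \<le> (\<Sum>i\<in>{1..k}. i * ns i)"
    by (rule member_le_sum) (use assms in auto)
  thus ?thesis using assms(1) unfolding poisson_k_tuples_def by simp
qed

lemma fin_tuples: "finite (poisson_k_tuples k n)"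
proof -
  have "poisson_k_tuples k n \<subseteq> {f. \<forall>x. (x \<in> {1..k} \<longrightarrow> f x \<in> {0..n}) \<and> (x \<notin> {1..k} \<longrightarrow> f x = 0)}"
  proof
    fix f assume f: "f \<in> poisson_k_tuples k n"
    have "f x \<le> n" if "x \<in> {1..k}" for x
    proof -
      have "x * f x \<le> n" using tuples_le[OF f that] .
      moreover have "f x \<le> x * f x" using that by simp
      ultimately show ?thesis by linarith
    qed
    thus "f \<in> {f. \<forall>x. (x \<in> {1..k} \<longrightarrow> f x \<in> {0..n}) \<and> (x \<notin> {1..k} \<longrightarrow> f x = 0)}"
      using f unfolding poisson_k_tuples_def by auto
  qed
  thus ?thesis by (rule finite_subset) (rule finite_set_of_finite_funs; simp)
qed

lemma upd_sum:
  fixes h :: "nat \<Rightarrow> nat \<Rightarrow> 'b::comm_monoid_add"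
  assumes "finite A" "j \<in> A"
  shows "(\<Sum>i\<in>A. h i ((f(j:=v)) i)) = h j v + (\<Sum>i\<in>A-{j}. h i (f i))"
  using assms by (simp add: sum.remove)

lemma upd_prod:
  fixes h :: "nat \<Rightarrow> nat \<Rightarrow> 'b::comm_monoid_mult"
  assumes "finite A" "j \<in> A"
  shows "(\<Prod>i\<in>A. h i ((f(j:=v)) i)) = h j v * (\<Prod>i\<in>A-{j}. h i (f i))"
  using assms by (simp add: prod.remove)

lemma step:
  assumes j: "j \<in> {1..k}" and jn: "j \<le> n"
  shows "(\<Sum>ns\<in>poisson_k_tuples k n. real (ns j) * wt k lam ns) = lam * SS k lam (n - j)"
proof -
  let ?T = "poisson_k_tuples k"
  have "(\<Sum>ns\<in>?T n. real (ns j) * wt k lam ns) = (\<Sum>ns\<in>{ns\<in>?T n. ns j \<ge> 1}. real (ns j) * wt k lam ns)"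
    by (rule sum.mono_neutral_right) (auto simp: fin_tuples)
  also have "\<dots> = (\<Sum>ns\<in>?T (n-j). real (ns j + 1) * wt k lam (ns(j := ns j + 1)))"
  proof (rule sum.reindex_bij_witness[where i = "\<lambda>ns. ns(j := ns j + 1)" and j = "\<lambda>ns. ns(j := ns j - 1)"])
    fix a assume a: "a \<in> {ns\<in>?T n. ns j \<ge> 1}"
    show "(a(j := a j - 1))(j := (a(j := a j - 1)) j + 1) = a" using a by auto
    have "(\<Sum>i\<in>{1..k}. i * (a(j := a j - 1)) i) = j * (a j - 1) + (\<Sum>i\<in>{1..k}-{j}. i * a i)"
      using upd_sum[of "{1..k}" j "\<lambda>i x. i * x" a "a j - 1"] j by simp
    moreover have "(\<Sum>i\<in>{1..k}. i * a i) = j * a j + (\<Sum>i\<in>{1..k}-{j}. i * a i)"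
      using j by (simp add: sum.remove)
    moreover have "(\<Sum>i\<in>{1..k}. i * a i) = n" using a unfolding poisson_k_tuples_def by simp
    moreover have "j * (a j - 1) = j * a j - j" by (simp add: right_diff_distrib')
    moreover have "j \<le> j * a j" using a by simp
    ultimately have "(\<Sum>i\<in>{1..k}. i * (a(j := a j - 1)) i) = n - j" by linarith
    thus "a(j := a j - 1) \<in> ?T (n - j)" using a j unfolding poisson_k_tuples_def by auto
    show "real ((a(j := a j - 1)) j + 1) * wt k lam ((a(j := a j - 1))(j := (a(j := a j - 1)) j + 1)) =
          real (a j) * wt k lam a" using a by auto
  next
    fix b assume b: "b \<in> ?T (n - j)"
    show "(b(j := b j + 1))(j := (b(j := b j + 1)) j - 1) = b" by auto
    have "(\<Sum>i\<in>{1..k}. i * (b(j := b j + 1)) i) = j * (b j + 1) + (\<Sum>i\<in>{1..k}-{j}. i * b i)"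
      using upd_sum[of "{1..k}" j "\<lambda>i x. i * x" b "b j + 1"] j by simp
    moreover have "(\<Sum>i\<in>{1..k}. i * b i) = j * b j + (\<Sum>i\<in>{1..k}-{j}. i * b i)"
      using j by (simp add: sum.remove)
    moreover have "(\<Sum>i\<in>{1..k}. i * b i) = n - j" using b unfolding poisson_k_tuples_def by simp
    ultimately have "(\<Sum>i\<in>{1..k}. i * (b(j := b j + 1)) i) = n" using jn by simp
    thus "b(j := b j + 1) \<in> {ns\<in>?T n. ns j \<ge> 1}" using b j unfolding poisson_k_tuples_def by auto
  qed
  also have "\<dots> = (\<Sum>ns\<in>?T (n-j). lam * wt k lam ns)"
  proof (rule sum.cong[OF refl])
    fix b assume b: "b \<in> ?T (n - j)"
    define s where "s = (\<Sum>i\<in>{1..k}-{j}. b i)"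
    define P where "P = (\<Prod>i\<in>{1..k}-{j}. (fact (b i) :: real))"
    have P: "P > 0" unfolding P_def by (rule prod_pos) auto
    have e1: "(\<Sum>i\<in>{1..k}. (b(j := b j + 1)) i) = b j + 1 + s"
      using upd_sum[of "{1..k}" j "\<lambda>i x. x" b "b j + 1"] j s_def by simp
    have e2: "(\<Sum>i\<in>{1..k}. b i) = b j + s"
      using j s_def by (simp add: sum.remove)
    have e3: "(\<Prod>i\<in>{1..k}. (fact ((b(j := b j + 1)) i) :: real)) = fact (b j + 1) * P"
      using upd_prod[of "{1..k}" j "\<lambda>i x. (fact x :: real)" b "b j + 1"] j P_def by simp
    have e4: "(\<Prod>i\<in>{1..k}. (fact (b i) :: real)) = fact (b j) * P"
      using j P_def by (simp add: prod.remove)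
    have ff: "(fact (b j + 1) :: real) = real (b j + 1) * fact (b j)"
      by (simp add: fact_Suc)
    have fpos: "(fact (b j) :: real) > 0" by simp
    show "real (b j + 1) * wt k lam (b(j := b j + 1)) = lam * wt k lam b"
      unfolding wt_def e1 e2 e3 e4 ff using P fpos
      by (simp add: field_simps del: of_nat_Suc)
  qed
  also have "\<dots> = lam * SS k lam (n - j)" unfolding SS_def by (simp add: sum_distrib_left)
  finally show ?thesis .
qed

lemma recur:
  "real n * SS k lam n = (\<Sum>j\<in>{1..k}. real j * (if j \<le> n then lam * SS k lam (n - j) else 0))"
proof -
  let ?T = "poisson_k_tuples k"
  have "real n * SS k lam n = (\<Sum>ns\<in>?T n. real n * wt k lam ns)"
    unfolding SS_def by (simp add: sum_distrib_left)
  also have "\<dots> = (\<Sum>ns\<in>?T n. (\<Sum>j\<in>{1..k}. real j * (real (ns j) * wt k lam ns)))"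
  proof (rule sum.cong[OF refl])
    fix ns assume ns: "ns \<in> ?T n"
    have "real n = (\<Sum>j\<in>{1..k}. real j * real (ns j))"
      using ns unfolding poisson_k_tuples_def by (metis (mono_tags, lifting) mem_Collect_eq of_nat_mult of_nat_sum sum.cong)
    thus "real n * wt k lam ns = (\<Sum>j\<in>{1..k}. real j * (real (ns j) * wt k lam ns))"
      by (simp add: sum_distrib_right mult.assoc)
  qed
  also have "\<dots> = (\<Sum>j\<in>{1..k}. real j * (\<Sum>ns\<in>?T n. real (ns j) * wt k lam ns))"
    by (subst sum.swap) (simp add: sum_distrib_left)
  also have "\<dots> = (\<Sum>j\<in>{1..k}. real j * (if j \<le> n then lam * SS k lam (n - j) else 0))"
  proof (rule sum.cong[OF refl])
    fix j assume j: "j \<in> {1..k}"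
    show "real j * (\<Sum>ns\<in>?T n. real (ns j) * wt k lam ns) = real j * (if j \<le> n then lam * SS k lam (n - j) else 0)"
    proof (cases "j \<le> n")
      case True thus ?thesis using step[OF j True] by simp
    next
      case False
      have "ns j = 0" if "ns \<in> ?T n" for ns
      proof (rule ccontr)
        assume "ns j \<noteq> 0"
        hence "j \<le> j * ns j" by simp
        thus False using tuples_le[OF that j] False by linarith
      qed
      thus ?thesis using False by (simp add: sum.neutral)
    qed
  qed
  finally show ?thesis .
qed

lemma SS0: "SS k lam 0 = 1"
proof -
  have "poisson_k_tuples k 0 = {\<lambda>_. 0}"
  proof safe
    fix ns assume ns: "ns \<in> poisson_k_tuples k 0"
    show "ns = (\<lambda>_. 0)"
    proof
      fix i show "ns i = 0"
      proof (cases "i \<in> {1..k}")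
        case True
        have "i * ns i \<le> 0" using tuples_le[OF ns True] .
        thus ?thesis using True by simp
      next
        case False thus ?thesis using ns unfolding poisson_k_tuples_def by auto
      qed
    qed
  qed (auto simp: poisson_k_tuples_def)
  thus ?thesis unfolding SS_def wt_def by simp
qed

lemma SS_nonneg: "lam \<ge> 0 \<Longrightarrow> SS k lam n \<ge> 0"
  unfolding SS_def wt_def by (intro sum_nonneg divide_nonneg_pos prod_pos) auto

lemma gauss_real: "2 * (\<Sum>j\<in>{1..m}. real j) = real m * (real m + 1)"
  by (induction m) (auto simp: algebra_simps)

lemma SS_bound:
  assumes "0 < lam" and "lam < 2 / (real k + 1)"
  shows "SS k lam n \<le> 1 \<and> (n \<ge> 1 \<longrightarrow> SS k lam n < 1)"
proof (induction n rule: less_induct)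
  case (less n)
  show ?case
  proof (cases "n = 0")
    case True thus ?thesis by (simp add: SS0)
  next
    case False
    define m where "m = min k n"
    have m1: "m \<le> n" "m \<le> k" unfolding m_def by auto
    have "real n * SS k lam n = (\<Sum>j\<in>{1..k}. real j * (if j \<le> n then lam * SS k lam (n - j) else 0))"
      by (rule recur)
    also have "\<dots> \<le> (\<Sum>j\<in>{1..k}. real j * (if j \<le> n then lam else 0))"
    proof (rule sum_mono)
      fix j assume j: "j \<in> {1..k}"
      show "real j * (if j \<le> n then lam * SS k lam (n - j) else 0) \<le> real j * (if j \<le> n then lam else 0)"
      proof (cases "j \<le> n")
        case True
        have "SS k lam (n - j) \<le> 1" using less[of "n - j"] j True by auto
        hence "lam * SS k lam (n - j) \<le> lam" using assms by (simp add: mult_left_le)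
        thus ?thesis using True by (simp add: mult_left_mono)
      qed simp
    qed
    also have "\<dots> = (\<Sum>j\<in>{1..m}. real j * lam)"
      by (rule sum.mono_neutral_cong_right) (auto simp: m_def)
    also have "\<dots> = lam * (real m * (real m + 1)) / 2"
    proof -
      have "(\<Sum>j\<in>{1..m}. real j * lam) = lam * (\<Sum>j\<in>{1..m}. real j)"
        by (simp add: sum_distrib_left mult.commute)
      thus ?thesis using gauss_real[of m] by simp
    qed
    also have "\<dots> \<le> lam * (real m * (real k + 1)) / 2"
      using m1 assms by (intro divide_right_mono mult_left_mono) auto
    also have "\<dots> = real m * (lam * (real k + 1) / 2)" by simp
    also have "\<dots> \<le> real n * (lam * (real k + 1) / 2)"
      using m1 assms by (intro mult_right_mono) auto
    also have "\<dots> < real n * 1"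
    proof -
      have "lam * (real k + 1) < 2" using assms by (simp add: field_simps)
      thus ?thesis using False by simp
    qed
    finally have "real n * SS k lam n < real n * 1" .
    hence "SS k lam n < 1" using False by (simp add: mult_less_cancel_left)
    thus ?thesis by simp
  qed
qed

theorem mainTheorem3:
  fixes k :: nat and lam :: real
  assumes "k \<ge> 2" and "0 < lam" and "lam < 2 / (real k + 1)"
  shows "\<forall>n::nat. n \<ge> 1 \<longrightarrow> poisson_k_pmf k lam 0 > poisson_k_pmf k lam n"
proof (intro allI impI)
  fix n :: nat assume "n \<ge> 1"
  hence "SS k lam n < 1" using SS_bound[OF assms(2,3)] by auto
  thus "poisson_k_pmf k lam 0 > poisson_k_pmf k lam n"
    unfolding pmf_SS SS0 by simp
qed

end
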